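(* Let $K$ be a field and let $\vec a_{0,1},\dots,\vec a_{0,n},\vec a_{1,1},\dots,\vec a_{1,n}\in K^{n+1}$ satisfy: for every $\vec s=(s_1,\dots,s_n)\in\{0,1\}^n$ and every $k\in\{1,\dots,n\}$, the set $\{\vec a_{s_1,1},\dots,\vec a_{s_n,n},\vec a_{1-s_k,k}\}$ is linearly independent. For $\vec s\in\{0,1\}^n$ let $\vec x_{\vec s}$ be the solution of the equations $\hat a_{s_1,1}=\dots=\hat a_{s_n,n}=0$. If $\vec s\neq\vec r$, then $\vec x_{\vec s}\neq\vec x_{\vec r}$.
   Context: For $\vec a\in K^{n+1}$, $\hat a$ denotes the affine-linear function $\hat a(x_1,\dots,x_n)=\vec a\cdot\vec x$ with $\vec x=(x_1,\dots,x_n,1)$. *)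

theory Defs
  imports Main "HOL-Library.FuncSet"
begin

text \<open>Vectors of K^(n+1) are functions nat => K, coordinates 1..n+1 used.
  Points of K^n are extensional functions on {1..n}.\<close>

definition hat :: "nat \<Rightarrow> (nat \<Rightarrow> 'a::field) \<Rightarrow> (nat \<Rightarrow> 'a) \<Rightarrow> 'a" where
  "hat n a x = (\<Sum>i=1..n. a i * x i) + a (Suc n)"

definition lin_indep_fam :: "nat \<Rightarrow> nat set \<Rightarrow> (nat \<Rightarrow> nat \<Rightarrow> 'a::field) \<Rightarrow> bool" where
  "lin_indep_fam n I v \<longleftrightarrow>
     (\<forall>c. (\<forall>j\<in>{1..Suc n}. (\<Sum>i\<in>I. c i * v i j) = 0) \<longrightarrow> (\<forall>i\<in>I. c i = 0))"

definition solves :: "nat \<Rightarrow> (nat \<Rightarrow> nat \<Rightarrow> nat \<Rightarrow> 'a::field) \<Rightarrow> (nat \<Rightarrow> nat) \<Rightarrow> (nat \<Rightarrow> 'a) \<Rightarrow> bool" where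
  "solves n a s x \<longleftrightarrow> x \<in> {1..n} \<rightarrow>\<^sub>E UNIV \<and> (\<forall>i\<in>{1..n}. hat n (a (s i) i) x = 0)"

end

theory Submission
  imports Defs "Jordan_Normal_Form.Determinant"
begin

lemma key:
  fixes v :: "nat \<Rightarrow> nat \<Rightarrow> 'a::field" and y :: "nat \<Rightarrow> 'a"
  assumes ind: "lin_indep_fam n {1..Suc n} v"
    and eq: "\<forall>i\<in>{1..Suc n}. (\<Sum>j=1..Suc n. v i j * y j) = 0"
  shows "\<forall>j\<in>{1..Suc n}. y j = 0"
proof (rule ccontr)
  assume nz: "\<not> (\<forall>j\<in>{1..Suc n}. y j = 0)"
  define A :: "'a mat" where "A = mat (Suc n) (Suc n) (\<lambda>(i,j). v (Suc i) (Suc j))"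
  define yv where "yv = vec (Suc n) (\<lambda>j. y (Suc j))"
  have A: "A \<in> carrier_mat (Suc n) (Suc n)" unfolding A_def by auto
  have sh: "\<And>f::nat\<Rightarrow>'a. (\<Sum>j<Suc n. f (Suc j)) = (\<Sum>j=1..Suc n. f j)"
  proof -
    fix f :: "nat \<Rightarrow> 'a"
    have "(\<Sum>j=1..Suc n. f j) = (\<Sum>j=0..n. f (Suc j))"
      using sum.shift_bounds_cl_Suc_ivl[of f 0 n] by simp
    then show "(\<Sum>j<Suc n. f (Suc j)) = (\<Sum>j=1..Suc n. f j)"
      by (simp add: atLeast0AtMost lessThan_Suc_atMost)
  qed
  have "A *\<^sub>v yv = 0\<^sub>v (Suc n)"
  proof (rule eq_vecI)
    fix i assume i: "i < dim_vec (0\<^sub>v (Suc n) :: 'a vec)"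
    then have "(A *\<^sub>v yv) $ i = (\<Sum>j<Suc n. v (Suc i) (Suc j) * y (Suc j))"
      unfolding A_def yv_def by (auto simp: scalar_prod_def atLeast0LessThan intro: sum.cong)
    also have "\<dots> = 0" using sh[of "\<lambda>j. v (Suc i) j * y j"] eq i by auto
    finally show "(A *\<^sub>v yv) $ i = 0\<^sub>v (Suc n) $ i" using i by simp
  qed (simp add: A_def)
  moreover have "yv \<noteq> 0\<^sub>v (Suc n)"
  proof
    assume "yv = 0\<^sub>v (Suc n)"
    then have "\<forall>j<Suc n. y (Suc j) = 0" unfolding yv_def
      by (metis index_vec index_zero_vec(1))
    then have "\<forall>j\<in>{1..Suc n}. y j = 0"
    proof (intro ballI)
      fix j assume h: "\<forall>j<Suc n. y (Suc j) = 0" and "j\<in>{1..Suc n}"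
      then have "j = Suc (j-1)" "j-1 < Suc n" by auto
      then show "y j = 0" using h by metis
    qed
    then show False using nz by blast
  qed
  moreover have "yv \<in> carrier_vec (Suc n)" unfolding yv_def by simp
  ultimately have "det A = 0" using det_0_iff_vec_prod_zero[OF A] by blast
  then have "det (transpose_mat A) = 0" using det_transpose[OF A] by simp
  then obtain c where c: "c \<in> carrier_vec (Suc n)" "c \<noteq> 0\<^sub>v (Suc n)"
      "transpose_mat A *\<^sub>v c = 0\<^sub>v (Suc n)"
    using det_0_iff_vec_prod_zero[of "transpose_mat A" "Suc n"] A by auto
  define c' where "c' i = c $ (i - 1)" for i
  have "\<forall>j\<in>{1..Suc n}. (\<Sum>i\<in>{1..Suc n}. c' i * v i j) = 0"
  proof
    fix j assume j: "j \<in> {1..Suc n}"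
    then have jj: "j - 1 < Suc n" by auto
    have "(transpose_mat A *\<^sub>v c) $ (j - 1) = 0" using c(3) jj by simp
    moreover have "(transpose_mat A *\<^sub>v c) $ (j - 1) = (\<Sum>i<Suc n. v (Suc i) j * c $ i)"
      using jj j c(1) unfolding A_def
      by (auto simp: scalar_prod_def atLeast0LessThan intro!: sum.cong)
    moreover have "(\<Sum>i<Suc n. v (Suc i) j * c $ i) = (\<Sum>i\<in>{1..Suc n}. c' i * v i j)"
      using sh[of "\<lambda>i. c' i * v i j"] by (simp add: c'_def mult.commute)
    ultimately show "(\<Sum>i\<in>{1..Suc n}. c' i * v i j) = 0" by simp
  qed
  with ind have "\<forall>i\<in>{1..Suc n}. c' i = 0" unfolding lin_indep_fam_def by blast
  then have "c = 0\<^sub>v (Suc n)"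
    proof (intro eq_vecI)
    fix i assume "i < dim_vec (0\<^sub>v (Suc n) :: 'a vec)"
    then have "Suc i \<in> {1..Suc n}" by auto
    then have "c' (Suc i) = 0" using \<open>\<forall>i\<in>{1..Suc n}. c' i = 0\<close> by blast
    then show "c $ i = 0\<^sub>v (Suc n) $ i" using \<open>i < _\<close> by (simp add: c'_def)
  qed (use c(1) in simp)
  with c(2) show False by simp
qed

theorem lemma5:
  fixes n :: nat and a :: "nat \<Rightarrow> nat \<Rightarrow> nat \<Rightarrow> 'a::field" and s r :: "nat \<Rightarrow> nat"
  assumes indep: "\<forall>t\<in>{1..n} \<rightarrow>\<^sub>E {0,1}. \<forall>k\<in>{1..n}.
      lin_indep_fam n {1..Suc n} (\<lambda>i. if i = Suc n then a (1 - t k) k else a (t i) i)"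
    and unique_sol: "\<forall>t\<in>{1..n} \<rightarrow>\<^sub>E {0,1}. \<exists>!x. solves n a t x"
    and s: "s \<in> {1..n} \<rightarrow>\<^sub>E {0,1}" and r: "r \<in> {1..n} \<rightarrow>\<^sub>E {0,1}"
    and "s \<noteq> r"
  shows "(THE x. solves n a s x) \<noteq> (THE x. solves n a r x)"
proof
  assume same: "(THE x. solves n a s x) = (THE x. solves n a r x)"
  define x where "x = (THE x. solves n a s x)"
  have xs: "solves n a s x" unfolding x_def using unique_sol s by (metis theI')
  have xr: "solves n a r x" unfolding x_def same using unique_sol r by (metis theI')
  obtain k where k: "s k \<noteq> r k" using \<open>s \<noteq> r\<close> by blast
  have kin: "k \<in> {1..n}" using k s r by (metis PiE_arb)
  have rk: "r k = 1 - s k" proof -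
    have "s k \<in> {0,1}" "r k \<in> {0,1}" using kin s r by auto
    then show ?thesis using k by auto
  qed
  define v where "v = (\<lambda>i. if i = Suc n then a (1 - s k) k else a (s i) i)"
  define y where "y j = (if j = Suc n then 1 else x j)" for j
  have hv: "\<And>w. (\<Sum>j=1..Suc n. w j * y j) = hat n w x"
    by (simp add: hat_def y_def)
  have "\<forall>i\<in>{1..Suc n}. (\<Sum>j=1..Suc n. v i j * y j) = 0"
  proof
    fix i assume i: "i \<in> {1..Suc n}"
    show "(\<Sum>j=1..Suc n. v i j * y j) = 0"
    proof (cases "i = Suc n")
      case True
      then show ?thesis using xr kin rk unfolding hv v_def solves_def by (metis atLeastAtMost_iff)
    next
      case False
      then have "i \<in> {1..n}" using i by auto
      then show ?thesis using xs False unfolding hv v_def solves_def by auto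
    qed
  qed
  then have "\<forall>j\<in>{1..Suc n}. y j = 0" using key indep s kin unfolding v_def by blast
  then have "y (Suc n) = 0" by simp
  then show False unfolding y_def by simp
qed

end
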